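(* Let $L$ be a free $O_p$-module of finite rank $t$, $\xi:L\to L$ an $O_p$-linear endomorphism, and $K\subseteq L$ an $O_p[\xi]$-submodule with $\xi(K)\subseteq p^nL$ and $L/K\cong\bigoplus_{i=1}^{t}O_p/p^{a_i}O_p$ with $n\ge a_1\ge a_2\ge\dots\ge a_t\ge0$. Put $b_i=n-a_i$ and $B(j)=\sum_{i=1}^jb_i$. Write the characteristic polynomial of $\xi$ on $L$ as $\det(X-\xi)=\sum_{s=0}^td_sX^{t-s}$. Then $d_s\equiv0\bmod p^{B(s)}$ for all $0\le s\le t$.
   Context: $O_p$ is the completion at $p$ of the ring of integers $O$ of an imaginary quadratic field in which the odd rational prime $p$ is inert (a complete discrete valuation ring with uniformizer $p$). *)

theory Defs
  imports "HOL-Computational_Algebra.Polynomial" "Jordan_Normal_Form.Char_Poly"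
begin

text \<open>The ring O_p: the completion at p of the ring of integers of an imaginary
quadratic field in which the odd prime p is inert.  Up to isomorphism this is the
unique complete discrete valuation ring of characteristic 0 with uniformizer p and
residue field of p^2 elements (the unramified quadratic extension of Z_p).\<close>

definition p_cauchy :: "nat \<Rightarrow> (nat \<Rightarrow> 'a::comm_ring_1) \<Rightarrow> bool" where
  "p_cauchy p x \<longleftrightarrow> (\<forall>k. \<exists>N. \<forall>m\<ge>N. \<forall>m'\<ge>N. (of_nat p :: 'a) ^ k dvd x m - x m')"

definition p_converges_to :: "nat \<Rightarrow> (nat \<Rightarrow> 'a::comm_ring_1) \<Rightarrow> 'a \<Rightarrow> bool" where
  "p_converges_to p x l \<longleftrightarrow> (\<forall>k. \<exists>N. \<forall>m\<ge>N. (of_nat p :: 'a) ^ k dvd x m - l)"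

definition Op_ring :: "nat \<Rightarrow> 'a::idom itself \<Rightarrow> bool" where
  "Op_ring p _ \<longleftrightarrow>
     prime p \<and> odd p
     \<comment> \<open>characteristic zero\<close>
     \<and> inj (of_nat :: nat \<Rightarrow> 'a)
     \<comment> \<open>discrete valuation ring with uniformizer p\<close>
     \<and> \<not> ((of_nat p :: 'a) dvd 1)
     \<and> (\<forall>x::'a. x \<noteq> 0 \<longrightarrow> (\<exists>u k. u dvd 1 \<and> x = u * of_nat p ^ k))
     \<comment> \<open>complete for the p-adic topology\<close>
     \<and> (\<forall>x::nat \<Rightarrow> 'a. p_cauchy p x \<longrightarrow> (\<exists>l. p_converges_to p x l))
     \<comment> \<open>residue field O_p / p O_p has p^2 elements (p is inert)\<close>
     \<and> card (range (\<lambda>x::'a. {y. (of_nat p :: 'a) dvd x - y})) = p ^ 2"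

text \<open>Componentwise congruence in O_p^t modulo (p^{a_1},...,p^{a_t}); the vector
index i (0-based) corresponds to the paper's index i+1.\<close>
definition cong_diag :: "'a::comm_ring_1 \<Rightarrow> nat \<Rightarrow> (nat \<Rightarrow> nat) \<Rightarrow> 'a vec \<Rightarrow> 'a vec \<Rightarrow> bool" where
  "cong_diag \<pi> t a u v \<longleftrightarrow> (\<forall>i<t. \<pi> ^ a (Suc i) dvd u $ i - v $ i)"

text \<open>L/K is isomorphic to the direct sum of O_p/p^{a_i} O_p (i = 1..t), L = O_p^t:
there is an O_p-module homomorphism from L onto the direct sum (represented by
representatives in O_p^t modulo cong_diag) whose kernel is exactly K.\<close>
definition quotient_iso_diag :: "'a::comm_ring_1 \<Rightarrow> nat \<Rightarrow> 'a vec set \<Rightarrow> (nat \<Rightarrow> nat) \<Rightarrow> bool" where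
  "quotient_iso_diag \<pi> t K a \<longleftrightarrow>
    (\<exists>\<psi>. (\<forall>x\<in>carrier_vec t. \<psi> x \<in> carrier_vec t)
       \<and> (\<forall>x\<in>carrier_vec t. \<forall>y\<in>carrier_vec t. cong_diag \<pi> t a (\<psi> (x + y)) (\<psi> x + \<psi> y))
       \<and> (\<forall>c. \<forall>x\<in>carrier_vec t. cong_diag \<pi> t a (\<psi> (c \<cdot>\<^sub>v x)) (c \<cdot>\<^sub>v \<psi> x))
       \<and> (\<forall>y\<in>carrier_vec t. \<exists>x\<in>carrier_vec t. cong_diag \<pi> t a (\<psi> x) y)
       \<and> (\<forall>x\<in>carrier_vec t. x \<in> K \<longleftrightarrow> cong_diag \<pi> t a (\<psi> x) (0\<^sub>v t)))"

end

theory Submission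
  imports Defs
begin

lemma poly_deg1_eq:
  fixes q :: "'a::comm_ring_1 poly"
  assumes "degree q \<le> 1"
  shows "q = pCons (coeff q 0) [:coeff q 1:]"
proof (rule poly_eqI)
  fix n show "coeff q n = coeff (pCons (coeff q 0) [:coeff q 1:]) n"
  proof (cases n)
    case (Suc m)
    then show ?thesis using assms by (cases m) (auto simp: coeff_eq_0)
  qed simp
qed

lemma coeff_deg1_mult:
  fixes q f :: "'a::comm_ring_1 poly"
  assumes "degree q \<le> 1"
  shows "coeff (q * f) k = coeff q 0 * coeff f k + (case k of 0 \<Rightarrow> 0 | Suc k' \<Rightarrow> coeff q 1 * coeff f k')"
proof -
  have "q * f = Polynomial.smult (coeff q 0) f + pCons 0 (Polynomial.smult (coeff q 1) f)"
    by (subst poly_deg1_eq[OF assms]) (simp add: mult_pCons_left)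
  then show ?thesis by (cases k) (auto simp: coeff_pCons)
qed

lemma prod_lin_dvd:
  fixes q :: "nat \<Rightarrow> 'a::comm_ring_1 poly" and \<pi> :: 'a and w :: "nat \<Rightarrow> nat"
  assumes "finite I" "\<forall>i\<in>I. degree (q i) \<le> 1" "\<forall>i\<in>I. \<pi> ^ (w i) dvd coeff (q i) 0"
  shows "\<forall>k m. (\<forall>S\<subseteq>I. card I \<le> card S + k \<longrightarrow> m \<le> sum w S) \<longrightarrow> \<pi> ^ m dvd coeff (prod q I) k"
  using assms
proof (induction I rule: finite_induct)
  case empty
  show ?case
  proof (intro allI impI)
    fix k m assume h: "\<forall>S\<subseteq>{}. card {} \<le> card S + k \<longrightarrow> m \<le> sum w S"
    show "\<pi> ^ m dvd coeff (prod q {}) k"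
    proof (cases k)
      case 0 then have "m = 0" using h by auto
      then show ?thesis using 0 by simp
    qed simp
  qed
next
  case (insert j I)
  have IH: "\<forall>k m. (\<forall>S\<subseteq>I. card I \<le> card S + k \<longrightarrow> m \<le> sum w S) \<longrightarrow> \<pi> ^ m dvd coeff (prod q I) k"
    using insert by auto
  have dj: "degree (q j) \<le> 1" and wj: "\<pi> ^ w j dvd coeff (q j) 0" using insert by auto
  show ?case
  proof (intro allI impI)
    fix k m assume h: "\<forall>S\<subseteq>insert j I. card (insert j I) \<le> card S + k \<longrightarrow> m \<le> sum w S"
    have cI: "card (insert j I) = Suc (card I)" using insert by simp
    have t1: "\<pi> ^ m dvd coeff (q j) 0 * coeff (prod q I) k"
    proof (cases "m \<le> w j")
      case True
      then have "\<pi> ^ m dvd \<pi> ^ w j" by (simp add: le_imp_power_dvd)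
      with wj show ?thesis by (meson dvd_mult2 dvd_trans)
    next
      case False
      have "\<pi> ^ (m - w j) dvd coeff (prod q I) k"
      proof (rule IH[rule_format])
        fix S assume S: "S \<subseteq> I" "card I \<le> card S + k"
        have fS: "finite S" using S insert(1) finite_subset by blast
        have jS: "j \<notin> S" using S insert(2) by auto
        have "insert j S \<subseteq> insert j I" using S by auto
        moreover have "card (insert j I) \<le> card (insert j S) + k" using S fS jS cI by simp
        ultimately have "m \<le> sum w (insert j S)" using h by blast
        then show "m - w j \<le> sum w S" using fS jS by simp
      qed
      then have "\<pi> ^ w j * \<pi> ^ (m - w j) dvd coeff (q j) 0 * coeff (prod q I) k"
        by (rule mult_dvd_mono[OF wj])
      moreover have "\<pi> ^ w j * \<pi> ^ (m - w j) = \<pi> ^ m" using False by (simp flip: power_add)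
      ultimately show ?thesis by simp
    qed
    have t2: "\<pi> ^ m dvd (case k of 0 \<Rightarrow> 0 | Suc k' \<Rightarrow> coeff (q j) 1 * coeff (prod q I) k')"
    proof (cases k)
      case (Suc k')
      have "\<pi> ^ m dvd coeff (prod q I) k'"
      proof (rule IH[rule_format])
        fix S assume S: "S \<subseteq> I" "card I \<le> card S + k'"
        then show "m \<le> sum w S" using h cI Suc by auto
      qed
      then show ?thesis using Suc by simp
    qed simp
    have "prod q (insert j I) = q j * prod q I" using insert by simp
    then show "\<pi> ^ m dvd coeff (prod q (insert j I)) k"
      using coeff_deg1_mult[OF dj, of "prod q I" k] t1 t2 by simp
  qed
qed


lemma coeff_of_int_mult: "coeff (of_int z * P) k = (of_int z :: 'a::comm_ring_1) * coeff P k"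
  by (simp add: of_int_poly)

lemma char_poly_coeff_dvd:
  fixes C :: "'a::comm_ring_1 mat" and \<pi> :: 'a and \<omega> :: "nat \<Rightarrow> nat"
  assumes C: "C \<in> carrier_mat t t"
    and dv: "\<forall>i<t. \<forall>k<t. \<pi> ^ (\<omega> k) dvd C $$ (i,k)"
    and s: "s \<le> t"
    and M: "\<forall>S \<subseteq> {0..<t}. s \<le> card S \<longrightarrow> M \<le> sum \<omega> S"
  shows "\<pi> ^ M dvd coeff (char_poly C) (t - s)"
proof -
  let ?CM = "char_poly_matrix C"
  have CM: "?CM \<in> carrier_mat t t" using C by simp
  have ent: "?CM $$ (i,j) = (if i = j then [:0,1:] else 0) + [:- C $$ (i,j):]" if "i < t" "j < t" for i j
    using C that unfolding char_poly_matrix_def by auto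
  have "char_poly C = (\<Sum>\<sigma>\<in>{\<sigma>. \<sigma> permutes {0..<t}}. signof \<sigma> * (\<Prod>i=0..<t. ?CM $$ (i, \<sigma> i)))"
    unfolding char_poly_def by (rule det_def'[OF CM])
  then have eq: "coeff (char_poly C) (t - s) = (\<Sum>\<sigma>\<in>{\<sigma>. \<sigma> permutes {0..<t}}. of_int (sign \<sigma>) * coeff (\<Prod>i=0..<t. ?CM $$ (i, \<sigma> i)) (t - s))"
    by (simp add: coeff_sum coeff_of_int_mult)
  show ?thesis unfolding eq
  proof (rule dvd_sum)
    fix \<sigma> assume "\<sigma> \<in> {\<sigma>. \<sigma> permutes {0..<t}}"
    then have sig: "\<sigma> permutes {0..<t}" by simp
    have sigt: "\<sigma> i < t" if "i < t" for i using sig that permutes_in_image by fastforce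
    have "\<forall>k m. (\<forall>S\<subseteq>{0..<t}. card {0..<t} \<le> card S + k \<longrightarrow> m \<le> sum (\<lambda>i. \<omega> (\<sigma> i)) S) \<longrightarrow>
        \<pi> ^ m dvd coeff (\<Prod>i=0..<t. ?CM $$ (i, \<sigma> i)) k"
    proof (rule prod_lin_dvd)
      show "\<forall>i\<in>{0..<t}. degree (?CM $$ (i, \<sigma> i)) \<le> 1"
      proof
        fix i assume "i \<in> {0..<t}"
        then have "?CM $$ (i, \<sigma> i) = (if i = \<sigma> i then [:0,1:] else 0) + [:- C $$ (i,\<sigma> i):]"
          using ent sigt by auto
        then show "degree (?CM $$ (i, \<sigma> i)) \<le> 1"
          by (auto intro!: order.trans[OF degree_add_le])
      qed
      show "\<forall>i\<in>{0..<t}. \<pi> ^ \<omega> (\<sigma> i) dvd coeff (?CM $$ (i, \<sigma> i)) 0"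
      proof
        fix i assume i: "i \<in> {0..<t}"
        then have "?CM $$ (i, \<sigma> i) = (if i = \<sigma> i then [:0,1:] else 0) + [:- C $$ (i,\<sigma> i):]"
          using ent sigt by auto
        then have "coeff (?CM $$ (i, \<sigma> i)) 0 = - C $$ (i,\<sigma> i)" by simp
        then show "\<pi> ^ \<omega> (\<sigma> i) dvd coeff (?CM $$ (i, \<sigma> i)) 0" using dv i sigt by simp
      qed
    qed simp
    moreover have "\<forall>S\<subseteq>{0..<t}. card {0..<t} \<le> card S + (t - s) \<longrightarrow> M \<le> sum (\<lambda>i. \<omega> (\<sigma> i)) S"
    proof (intro allI impI)
      fix S assume S: "S \<subseteq> {0..<t}" "card {0..<t} \<le> card S + (t - s)"
      have inj: "inj_on \<sigma> S" using permutes_inj[OF sig] by (rule inj_on_subset) simp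
      have "sum (\<lambda>i. \<omega> (\<sigma> i)) S = sum \<omega> (\<sigma> ` S)" using sum.reindex[OF inj, of \<omega>] by simp
      moreover have "\<sigma> ` S \<subseteq> {0..<t}" using S sigt by auto
      moreover have "card (\<sigma> ` S) = card S" using card_image[OF inj] .
      moreover have "s \<le> card S" using S s by simp
      ultimately show "M \<le> sum (\<lambda>i. \<omega> (\<sigma> i)) S" using M by metis
    qed
    ultimately have "\<pi> ^ M dvd coeff (\<Prod>i=0..<t. ?CM $$ (i, \<sigma> i)) (t - s)" by blast
    then show "\<pi> ^ M dvd of_int (sign \<sigma>) * coeff (\<Prod>i=0..<t. ?CM $$ (i, \<sigma> i)) (t - s)" by simp
  qed
qed

lemma sum_mono_weights:
  fixes w :: "nat \<Rightarrow> nat"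
  assumes mono: "\<And>i j. i \<le> j \<Longrightarrow> w i \<le> w j"
  shows "finite U \<Longrightarrow> card U = s \<Longrightarrow> (\<Sum>j<s. w j) \<le> sum w U"
proof (induction s arbitrary: U)
  case 0 then show ?case by simp
next
  case (Suc s)
  have fU: "finite U" and cU: "card U = Suc s" using Suc.prems by auto
  then have ne: "U \<noteq> {}" by auto
  define m where "m = Max U"
  have mU: "m \<in> U" unfolding m_def using fU ne by (rule Max_in)
  have cU': "card (U - {m}) = s" using cU mU fU by simp
  have IH: "(\<Sum>j<s. w j) \<le> sum w (U - {m})" using Suc.IH[of "U - {m}"] cU' fU by simp
  have "U \<subseteq> {0..m}" using fU m_def by auto
  then have "card U \<le> card {0..m}" by (intro card_mono) auto
  then have "s \<le> m" using cU by simp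
  then have "w s \<le> w m" by (rule mono)
  moreover have "sum w U = w m + sum w (U - {m})" using fU mU by (rule sum.remove)
  ultimately show ?case using IH by simp
qed

lemma sum_mono_weights_ge:
  fixes w :: "nat \<Rightarrow> nat"
  assumes mono: "\<And>i j. i \<le> j \<Longrightarrow> w i \<le> w j" and fU: "finite U" and s: "s \<le> card U"
  shows "(\<Sum>j<s. w j) \<le> sum w U"
proof -
  have "(\<Sum>j<s. w j) \<le> (\<Sum>j<card U. w j)" by (rule sum_mono2) (use s in auto)
  also have "\<dots> \<le> sum w U" using sum_mono_weights[OF mono fU] by simp
  finally show ?thesis .
qed


definition lc :: "nat \<Rightarrow> nat set \<Rightarrow> (nat \<Rightarrow> 'a::comm_ring_1) \<Rightarrow> (nat \<Rightarrow> 'a vec) \<Rightarrow> 'a vec" where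
  "lc t J c x = vec t (\<lambda>i. \<Sum>j\<in>J. c j * x j $ i)"

lemma lc_carrier[simp]: "lc t J c x \<in> carrier_vec t" unfolding lc_def by simp

lemma lc_dim[simp]: "dim_vec (lc t J c x) = t" unfolding lc_def by simp

lemma lc_index[simp]: "i < t \<Longrightarrow> lc t J c x $ i = (\<Sum>j\<in>J. c j * x j $ i)" unfolding lc_def by simp

lemma lc_empty: "lc t {} c x = 0\<^sub>v t" unfolding lc_def by (rule eq_vecI) auto

lemma lc_insert: "finite J \<Longrightarrow> j \<notin> J \<Longrightarrow> x j \<in> carrier_vec t \<Longrightarrow>
   lc t (insert j J) c x = c j \<cdot>\<^sub>v x j + lc t J c x"
  unfolding lc_def by (rule eq_vecI) auto

lemma cd_trans: "cong_diag \<pi> t a u v \<Longrightarrow> cong_diag \<pi> t a v w \<Longrightarrow> cong_diag \<pi> t a u w"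
  unfolding cong_diag_def
proof (intro allI impI)
  fix i assume h1: "\<forall>i<t. \<pi> ^ a (Suc i) dvd u $ i - v $ i" and h2: "\<forall>i<t. \<pi> ^ a (Suc i) dvd v $ i - w $ i" and i: "i < t"
  have "\<pi> ^ a (Suc i) dvd (u $ i - v $ i) + (v $ i - w $ i)" using h1 h2 i by (intro dvd_add) auto
  moreover have "(u $ i - v $ i) + (v $ i - w $ i) = u $ i - w $ i" by simp
  ultimately show "\<pi> ^ a (Suc i) dvd u $ i - w $ i" by metis
qed

lemma cd_add: "u \<in> carrier_vec t \<Longrightarrow> u' \<in> carrier_vec t \<Longrightarrow> v \<in> carrier_vec t \<Longrightarrow> v' \<in> carrier_vec t \<Longrightarrow>
  cong_diag \<pi> t a u u' \<Longrightarrow> cong_diag \<pi> t a v v' \<Longrightarrow> cong_diag \<pi> t a (u + v) (u' + v')"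
  unfolding cong_diag_def
proof (intro allI impI)
  fix i assume c: "u \<in> carrier_vec t" "u' \<in> carrier_vec t" "v \<in> carrier_vec t" "v' \<in> carrier_vec t"
    and h1: "\<forall>i<t. \<pi> ^ a (Suc i) dvd u $ i - u' $ i" and h2: "\<forall>i<t. \<pi> ^ a (Suc i) dvd v $ i - v' $ i" and i: "i < t"
  have "\<pi> ^ a (Suc i) dvd (u $ i - u' $ i) + (v $ i - v' $ i)" using h1 h2 i by (intro dvd_add) auto
  moreover have "(u + v) $ i - (u' + v') $ i = (u $ i - u' $ i) + (v $ i - v' $ i)" using c i by simp
  ultimately show "\<pi> ^ a (Suc i) dvd (u + v) $ i - (u' + v') $ i" by simp
qed

lemma cd_smult: "u \<in> carrier_vec t \<Longrightarrow> u' \<in> carrier_vec t \<Longrightarrow>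
  cong_diag \<pi> t a u u' \<Longrightarrow> cong_diag \<pi> t a (c \<cdot>\<^sub>v u) (c \<cdot>\<^sub>v u')"
  unfolding cong_diag_def
proof (intro allI impI)
  fix i assume c: "u \<in> carrier_vec t" "u' \<in> carrier_vec t"
    and h1: "\<forall>i<t. \<pi> ^ a (Suc i) dvd u $ i - u' $ i" and i: "i < t"
  have "\<pi> ^ a (Suc i) dvd c * (u $ i - u' $ i)" using h1 i by (intro dvd_mult) auto
  moreover have "(c \<cdot>\<^sub>v u) $ i - (c \<cdot>\<^sub>v u') $ i = c * (u $ i - u' $ i)" using c i by (simp add: algebra_simps)
  ultimately show "\<pi> ^ a (Suc i) dvd (c \<cdot>\<^sub>v u) $ i - (c \<cdot>\<^sub>v u') $ i" by simp
qed

lemma cd_lc: "\<forall>j\<in>J. cong_diag \<pi> t a (u j) (v j) \<Longrightarrow> cong_diag \<pi> t a (lc t J c u) (lc t J c v)"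
  unfolding cong_diag_def
proof (intro allI impI)
  fix i assume h: "\<forall>j\<in>J. \<forall>i<t. \<pi> ^ a (Suc i) dvd u j $ i - v j $ i" and i: "i < t"
  have "lc t J c u $ i - lc t J c v $ i = (\<Sum>j\<in>J. c j * (u j $ i - v j $ i))"
    using i by (simp add: sum_subtractf algebra_simps)
  moreover have "\<pi> ^ a (Suc i) dvd (\<Sum>j\<in>J. c j * (u j $ i - v j $ i))"
    using h i by (intro dvd_sum) auto
  ultimately show "\<pi> ^ a (Suc i) dvd lc t J c u $ i - lc t J c v $ i" by simp
qed

lemma psi_lc:
  assumes psi_c: "\<forall>x\<in>carrier_vec t. \<psi> x \<in> carrier_vec t"
    and psi_add: "\<forall>x\<in>carrier_vec t. \<forall>y\<in>carrier_vec t. cong_diag \<pi> t a (\<psi> (x + y)) (\<psi> x + \<psi> y)"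
    and psi_smult: "\<forall>c. \<forall>x\<in>carrier_vec t. cong_diag \<pi> t a (\<psi> (c \<cdot>\<^sub>v x)) (c \<cdot>\<^sub>v \<psi> x)"
    and fin: "finite J" and xc: "\<forall>j\<in>J. x j \<in> carrier_vec t"
  shows "cong_diag \<pi> t a (\<psi> (lc t J c x)) (lc t J c (\<lambda>j. \<psi> (x j)))"
  using fin xc
proof (induction J rule: finite_induct)
  case empty
  have z: "0\<^sub>v t \<in> carrier_vec t" by simp
  have "cong_diag \<pi> t a (\<psi> (0\<^sub>v t + 0\<^sub>v t)) (\<psi> (0\<^sub>v t) + \<psi> (0\<^sub>v t))" using psi_add z by blast
  then have "cong_diag \<pi> t a (\<psi> (0\<^sub>v t)) (0\<^sub>v t)" using psi_c z unfolding cong_diag_def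
  proof (intro allI impI)
    fix i assume "\<forall>i<t. \<pi> ^ a (Suc i) dvd \<psi> (0\<^sub>v t + 0\<^sub>v t) $ i - (\<psi> (0\<^sub>v t) + \<psi> (0\<^sub>v t)) $ i"
      and c: "\<forall>x\<in>carrier_vec t. \<psi> x \<in> carrier_vec t" and i: "i < t"
    then have "\<pi> ^ a (Suc i) dvd \<psi> (0\<^sub>v t + 0\<^sub>v t) $ i - (\<psi> (0\<^sub>v t) + \<psi> (0\<^sub>v t)) $ i" by auto
    moreover have "\<psi> (0\<^sub>v t + 0\<^sub>v t) $ i - (\<psi> (0\<^sub>v t) + \<psi> (0\<^sub>v t)) $ i = - (\<psi> (0\<^sub>v t) $ i)"
    proof -
      have pz: "\<psi> (0\<^sub>v t) \<in> carrier_vec t" using c z by blast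
      have "(\<psi> (0\<^sub>v t) + \<psi> (0\<^sub>v t)) $ i = \<psi> (0\<^sub>v t) $ i + \<psi> (0\<^sub>v t) $ i" using pz i by simp
      moreover have "0\<^sub>v t + 0\<^sub>v t = (0\<^sub>v t :: 'a vec)" by simp
      ultimately show ?thesis by simp
    qed
    ultimately have "\<pi> ^ a (Suc i) dvd - (\<psi> (0\<^sub>v t) $ i)" by metis
    then show "\<pi> ^ a (Suc i) dvd \<psi> (0\<^sub>v t) $ i - 0\<^sub>v t $ i" using i by simp
  qed
  then show ?case by (simp add: lc_empty)
next
  case (insert j J)
  have xj: "x j \<in> carrier_vec t" using insert by auto
  have pxj: "\<psi> (x j) \<in> carrier_vec t" using psi_c xj by auto
  have IH: "cong_diag \<pi> t a (\<psi> (lc t J c x)) (lc t J c (\<lambda>j. \<psi> (x j)))" using insert by auto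
  have e1: "lc t (insert j J) c x = c j \<cdot>\<^sub>v x j + lc t J c x" using insert xj by (simp add: lc_insert)
  have e2: "lc t (insert j J) c (\<lambda>j. \<psi> (x j)) = c j \<cdot>\<^sub>v \<psi> (x j) + lc t J c (\<lambda>j. \<psi> (x j))"
    using insert pxj by (simp add: lc_insert)
  have s1: "cong_diag \<pi> t a (\<psi> (c j \<cdot>\<^sub>v x j + lc t J c x)) (\<psi> (c j \<cdot>\<^sub>v x j) + \<psi> (lc t J c x))"
    using psi_add xj by simp
  have s2: "cong_diag \<pi> t a (\<psi> (c j \<cdot>\<^sub>v x j) + \<psi> (lc t J c x)) (c j \<cdot>\<^sub>v \<psi> (x j) + lc t J c (\<lambda>j. \<psi> (x j)))"
    by (rule cd_add) (use psi_c xj psi_smult IH in auto)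
  show ?case unfolding e1 e2 by (rule cd_trans[OF s1 s2])
qed

lemma dvd_cancel_pow:
  fixes \<pi> :: "'a::idom"
  assumes "\<pi> \<noteq> 0" "a \<le> n" "\<pi> ^ n dvd \<pi> ^ a * y"
  shows "\<pi> ^ (n - a) dvd y"
proof -
  obtain z where z: "\<pi> ^ a * y = \<pi> ^ n * z" using assms(3) by (auto elim: dvdE)
  have "\<pi> ^ n = \<pi> ^ a * \<pi> ^ (n - a)" using assms(2) by (simp flip: power_add)
  with z have "\<pi> ^ a * y = \<pi> ^ a * (\<pi> ^ (n - a) * z)" by (simp add: mult.assoc)
  then have "y = \<pi> ^ (n - a) * z" using assms(1) by simp
  then show ?thesis by simp
qed

lemma cd_refl: "cong_diag \<pi> t a u u" by (simp add: cong_diag_def)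

lemma sum_unit_vec: "i < t \<Longrightarrow> (\<Sum>j\<in>{0..<t}. g j * unit_vec t j $ i) = (g i :: 'a::comm_ring_1)"
proof -
  assume i: "i < t"
  have "(\<Sum>j\<in>{0..<t}. g j * unit_vec t j $ i) = (\<Sum>j\<in>{0..<t}. if j = i then g j else 0)"
    using i by (intro sum.cong) auto
  also have "\<dots> = g i" using i by simp
  finally show ?thesis .
qed

lemma sum_shift1: "(\<Sum>i=1..s. g i) = (\<Sum>j<s. g (Suc j) :: nat)"
  by (induction s) (auto simp: atLeast0AtMost)

theorem lemma4p2:
  fixes p t n :: nat and a :: "nat \<Rightarrow> nat"
    and \<xi> :: "'a::idom mat" and K :: "'a vec set"
  assumes Op: "Op_ring p TYPE('a)"
    and xi: "\<xi> \<in> carrier_mat t t"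
    and K_sub: "K \<subseteq> carrier_vec t"
    and K_zero: "0\<^sub>v t \<in> K"
    and K_add: "\<forall>x\<in>K. \<forall>y\<in>K. x + y \<in> K"
    and K_smult: "\<forall>c. \<forall>x\<in>K. c \<cdot>\<^sub>v x \<in> K"
    and K_xi: "\<forall>x\<in>K. \<xi> *\<^sub>v x \<in> K"
    and xi_K: "\<forall>x\<in>K. \<forall>i<t. (of_nat p :: 'a) ^ n dvd (\<xi> *\<^sub>v x) $ i"
    and quot: "quotient_iso_diag (of_nat p :: 'a) t K a"
    and a_le_n: "\<forall>i. 1 \<le> i \<and> i \<le> t \<longrightarrow> a i \<le> n"
    and a_mono: "\<forall>i j. 1 \<le> i \<and> i \<le> j \<and> j \<le> t \<longrightarrow> a j \<le> a i"
  shows "\<forall>s\<le>t. (of_nat p :: 'a) ^ (\<Sum>i=1..s. n - a i) dvd coeff (char_poly \<xi>) (t - s)"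
proof -
  define \<pi> where "\<pi> = (of_nat p :: 'a)"
  have Opd: "prime p \<and> odd p \<and> inj (of_nat :: nat \<Rightarrow> 'a) \<and> \<not> \<pi> dvd 1
     \<and> (\<forall>x::'a. x \<noteq> 0 \<longrightarrow> (\<exists>u k. u dvd 1 \<and> x = u * \<pi> ^ k))
     \<and> (\<forall>x::nat \<Rightarrow> 'a. p_cauchy p x \<longrightarrow> (\<exists>l. p_converges_to p x l))
     \<and> card (range (\<lambda>x::'a. {y. \<pi> dvd x - y})) = p ^ 2"
    using Op unfolding Op_ring_def \<pi>_def .
  have pp: "prime p" using Opd by (elim conjE)
  have injp: "inj (of_nat :: nat \<Rightarrow> 'a)" using Opd by (elim conjE)
  have pnu: "\<not> \<pi> dvd 1" using Opd by (elim conjE)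
  have dvr: "\<forall>x::'a. x \<noteq> 0 \<longrightarrow> (\<exists>u k. u dvd 1 \<and> x = u * \<pi> ^ k)" using Opd by (elim conjE)
  have pi0: "\<pi> \<noteq> 0"
  proof
    assume "\<pi> = 0"
    then have "(of_nat p :: 'a) = of_nat 0" by (simp add: \<pi>_def)
    then have "p = 0" using injp by (meson injD)
    then show False using pp by simp
  qed
  have unit: "x dvd 1" if nx: "\<not> \<pi> dvd x" for x
  proof -
    have "x \<noteq> 0" using nx by auto
    then obtain u k where u: "u dvd 1" "x = u * \<pi> ^ k" using dvr by blast
    have "k = 0"
    proof (rule ccontr)
      assume "k \<noteq> 0"
      then have "\<pi> dvd \<pi> ^ k" by (simp add: dvd_power)
      then have "\<pi> dvd x" using u by simp
      then show False using nx by simp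
    qed
    then show ?thesis using u by simp
  qed
  from quot[folded \<pi>_def] obtain \<psi> where
      psi_c: "\<forall>x\<in>carrier_vec t. \<psi> x \<in> carrier_vec t"
    and psi_add: "\<forall>x\<in>carrier_vec t. \<forall>y\<in>carrier_vec t. cong_diag \<pi> t a (\<psi> (x + y)) (\<psi> x + \<psi> y)"
    and psi_smult: "\<forall>c. \<forall>x\<in>carrier_vec t. cong_diag \<pi> t a (\<psi> (c \<cdot>\<^sub>v x)) (c \<cdot>\<^sub>v \<psi> x)"
    and psi_surj: "\<forall>y\<in>carrier_vec t. \<exists>x\<in>carrier_vec t. cong_diag \<pi> t a (\<psi> x) y"
    and psi_ker: "\<forall>x\<in>carrier_vec t. x \<in> K \<longleftrightarrow> cong_diag \<pi> t a (\<psi> x) (0\<^sub>v t)"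
    unfolding quotient_iso_diag_def by blast
  have xiK: "\<forall>x\<in>K. \<forall>i<t. \<pi> ^ n dvd (\<xi> *\<^sub>v x) $ i" using xi_K unfolding \<pi>_def .
  have "\<forall>j. \<exists>yj. j < t \<longrightarrow> yj \<in> carrier_vec t \<and> cong_diag \<pi> t a (\<psi> yj) (unit_vec t j)"
    using psi_surj unit_vec_carrier by metis
  from choice[OF this] obtain y where
    y: "\<forall>j. j < t \<longrightarrow> y j \<in> carrier_vec t \<and> cong_diag \<pi> t a (\<psi> (y j)) (unit_vec t j)" by blast
  have yc: "y j \<in> carrier_vec t" if "j < t" for j using y that by blast
  have ycd: "cong_diag \<pi> t a (\<psi> (y j)) (unit_vec t j)" if "j < t" for j using y that by blast
  define c where "c k j = \<psi> (unit_vec t k) $ j" for k j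
  define kk where "kk k = unit_vec t k + lc t {0..<t} (\<lambda>j. - c k j) y" for k
  have kkc: "kk k \<in> carrier_vec t" for k unfolding kk_def by simp
  have kkK: "kk k \<in> K" if k: "k < t" for k
  proof -
    let ?L = "lc t {0..<t} (\<lambda>j. - c k j) y"
    have ek: "unit_vec t k \<in> carrier_vec t" by simp
    have pek: "\<psi> (unit_vec t k) \<in> carrier_vec t" using psi_c ek by blast
    have 1: "cong_diag \<pi> t a (\<psi> (kk k)) (\<psi> (unit_vec t k) + \<psi> ?L)"
      using psi_add ek unfolding kk_def by simp
    have 2: "cong_diag \<pi> t a (\<psi> ?L) (lc t {0..<t} (\<lambda>j. - c k j) (\<lambda>j. \<psi> (y j)))"
      by (rule psi_lc[OF psi_c psi_add psi_smult]) (use yc in auto)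
    have 3: "cong_diag \<pi> t a (lc t {0..<t} (\<lambda>j. - c k j) (\<lambda>j. \<psi> (y j))) (lc t {0..<t} (\<lambda>j. - c k j) (\<lambda>j. unit_vec t j))"
      by (rule cd_lc) (use ycd in auto)
    have 4: "cong_diag \<pi> t a (\<psi> (unit_vec t k) + \<psi> ?L) (\<psi> (unit_vec t k) + lc t {0..<t} (\<lambda>j. - c k j) (\<lambda>j. unit_vec t j))"
      by (rule cd_add) (use cd_trans[OF 2 3] cd_refl pek psi_c in auto)
    have 5: "\<psi> (unit_vec t k) + lc t {0..<t} (\<lambda>j. - c k j) (\<lambda>j. unit_vec t j) = 0\<^sub>v t"
    proof (rule eq_vecI)
      fix i assume "i < dim_vec (0\<^sub>v t :: 'a vec)"
      then have i: "i < t" by simp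
      have "lc t {0..<t} (\<lambda>j. - c k j) (\<lambda>j. unit_vec t j) $ i = (\<Sum>j\<in>{0..<t}. - c k j * unit_vec t j $ i)"
        by (rule lc_index[OF i])
      also have "\<dots> = - c k i" by (rule sum_unit_vec[OF i])
      finally have lci: "lc t {0..<t} (\<lambda>j. - c k j) (\<lambda>j. unit_vec t j) $ i = - c k i" .
      have "(\<psi> (unit_vec t k) + lc t {0..<t} (\<lambda>j. - c k j) (\<lambda>j. unit_vec t j)) $ i
          = \<psi> (unit_vec t k) $ i + lc t {0..<t} (\<lambda>j. - c k j) (\<lambda>j. unit_vec t j) $ i"
        by (rule index_add_vec(1)) (simp add: i)
      also have "\<dots> = \<psi> (unit_vec t k) $ i + - c k i" by (simp only: lci)
      also have "\<dots> = 0" by (simp add: c_def)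
      finally show "(\<psi> (unit_vec t k) + lc t {0..<t} (\<lambda>j. - c k j) (\<lambda>j. unit_vec t j)) $ i = 0\<^sub>v t $ i"
        using i by simp
    qed (use pek in simp)
    have "cong_diag \<pi> t a (\<psi> (kk k)) (0\<^sub>v t)" using cd_trans[OF 1 4] 5 by simp
    then show ?thesis using psi_ker kkc by blast
  qed
  define V where "V m = (if m < t then y m else kk (m - t))" for m
  define wt where "wt m = (if m < t then n - a (Suc m) else n)" for m
  have Vc: "V m \<in> carrier_vec t" for m
    by (cases "m < t") (simp_all add: V_def yc kkc)
  have Vd: "dim_vec (V m) = t" for m using Vc[of m] by (rule carrier_vecD)
  have Vdiv: "\<forall>i<t. \<pi> ^ (wt m) dvd (\<xi> *\<^sub>v V m) $ i" if m: "m < 2 * t" for m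
  proof (cases "m < t")
    case False
    then have "V m \<in> K" unfolding V_def using kkK m by simp
    then show ?thesis using xiK False unfolding wt_def by simp
  next
    case True
    let ?e = "a (Suc m)"
    define z where "z = \<pi> ^ ?e \<cdot>\<^sub>v y m"
    have ym: "y m \<in> carrier_vec t" using yc True by simp
    have zc: "z \<in> carrier_vec t" unfolding z_def using ym by simp
    have pym: "\<psi> (y m) \<in> carrier_vec t" using psi_c ym by blast
    have c1: "cong_diag \<pi> t a (\<psi> z) (\<pi> ^ ?e \<cdot>\<^sub>v \<psi> (y m))" unfolding z_def using psi_smult ym by blast
    have c2: "cong_diag \<pi> t a (\<pi> ^ ?e \<cdot>\<^sub>v \<psi> (y m)) (\<pi> ^ ?e \<cdot>\<^sub>v unit_vec t m)"
      by (rule cd_smult) (use pym ycd True in auto)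
    have c3: "cong_diag \<pi> t a (\<pi> ^ ?e \<cdot>\<^sub>v unit_vec t m) (0\<^sub>v t)"
      unfolding cong_diag_def
    proof (intro allI impI)
      fix i assume i: "i < t"
      have "(\<pi> ^ ?e \<cdot>\<^sub>v unit_vec t m) $ i - 0\<^sub>v t $ i = (if i = m then \<pi> ^ ?e else 0)"
        using i True by simp
      then show "\<pi> ^ a (Suc i) dvd (\<pi> ^ ?e \<cdot>\<^sub>v unit_vec t m) $ i - 0\<^sub>v t $ i" by simp
    qed
    have "z \<in> K" using psi_ker zc cd_trans[OF cd_trans[OF c1 c2] c3] by blast
    then have zd: "\<forall>i<t. \<pi> ^ n dvd (\<xi> *\<^sub>v z) $ i" using xiK by blast
    have ea: "?e \<le> n" using a_le_n True by simp
    show ?thesis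
    proof (intro allI impI)
      fix i assume i: "i < t"
      have "(\<xi> *\<^sub>v z) $ i = \<pi> ^ ?e * (\<xi> *\<^sub>v y m) $ i"
        unfolding z_def using i xi ym by simp
      moreover have "\<pi> ^ n dvd (\<xi> *\<^sub>v z) $ i" using zd i by blast
      ultimately have "\<pi> ^ n dvd \<pi> ^ ?e * (\<xi> *\<^sub>v V m) $ i" using True unfolding V_def by simp
      then have "\<pi> ^ (n - ?e) dvd (\<xi> *\<^sub>v V m) $ i" by (rule dvd_cancel_pow[OF pi0 ea])
      then show "\<pi> ^ (wt m) dvd (\<xi> *\<^sub>v V m) $ i" unfolding wt_def using True by simp
    qed
  qed
  have wtmono: "wt i \<le> wt j" if ij: "i \<le> j" for i j
  proof (cases "j < t")
    case True
    then have "1 \<le> Suc i \<and> Suc i \<le> Suc j \<and> Suc j \<le> t" using ij by simp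
    then have "a (Suc j) \<le> a (Suc i)" using a_mono by blast
    then show ?thesis unfolding wt_def using True ij by simp
  next
    case False
    then show ?thesis unfolding wt_def by simp
  qed
  define Cf where "Cf k m = (if m < t then c k m else if m = t + k then 1 else 0)" for k m
  have idm: "1\<^sub>m t = mat\<^sub>r t t (\<lambda>k. finsum_vec TYPE('a) t (\<lambda>m. Cf k m \<cdot>\<^sub>v V m) {0..<2*t})"
  proof (rule eq_matI)
    fix k i assume "k < dim_row (mat\<^sub>r t t (\<lambda>k. finsum_vec TYPE('a) t (\<lambda>m. Cf k m \<cdot>\<^sub>v V m) {0..<2*t}))"
      "i < dim_col (mat\<^sub>r t t (\<lambda>k. finsum_vec TYPE('a) t (\<lambda>m. Cf k m \<cdot>\<^sub>v V m) {0..<2*t}))"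
    then have k: "k < t" and i: "i < t" by auto
    have "mat\<^sub>r t t (\<lambda>k. finsum_vec TYPE('a) t (\<lambda>m. Cf k m \<cdot>\<^sub>v V m) {0..<2*t}) $$ (k, i)
       = (\<Sum>m\<in>{0..<2*t}. (Cf k m \<cdot>\<^sub>v V m) $ i)"
      using k i Vc by (simp add: index_finsum_vec)
    also have "\<dots> = (\<Sum>m\<in>{0..<2*t}. Cf k m * V m $ i)"
      using i by (intro sum.cong) (auto simp: Vd)
    also have "\<dots> = (\<Sum>m\<in>{0..<t}. Cf k m * V m $ i) + (\<Sum>m\<in>{t..<2*t}. Cf k m * V m $ i)"
      by (simp add: sum.atLeastLessThan_concat)
    also have "(\<Sum>m\<in>{0..<t}. Cf k m * V m $ i) = (\<Sum>m\<in>{0..<t}. c k m * y m $ i)"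
      by (intro sum.cong) (auto simp: Cf_def V_def)
    also have "(\<Sum>m\<in>{t..<2*t}. Cf k m * V m $ i) = (\<Sum>m\<in>{t..<2*t}. if m = t + k then kk k $ i else 0)"
      by (intro sum.cong) (auto simp: Cf_def V_def)
    also have "\<dots> = kk k $ i" using k by simp
    also have "kk k $ i = unit_vec t k $ i + (\<Sum>j\<in>{0..<t}. - c k j * y j $ i)"
      unfolding kk_def using i by simp
    finally have "mat\<^sub>r t t (\<lambda>k. finsum_vec TYPE('a) t (\<lambda>m. Cf k m \<cdot>\<^sub>v V m) {0..<2*t}) $$ (k, i)
       = unit_vec t k $ i" by (simp add: sum_negf)
    then show "1\<^sub>m t $$ (k, i) = mat\<^sub>r t t (\<lambda>k. finsum_vec TYPE('a) t (\<lambda>m. Cf k m \<cdot>\<^sub>v V m) {0..<2*t}) $$ (k, i)"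
      using k i by simp
  qed auto
  let ?F = "{f. (\<forall>i\<in>{0..<t}. f i \<in> {0..<2*t}) \<and> (\<forall>i. i \<notin> {0..<t} \<longrightarrow> f i = i)}"
  define G where "G f = mat\<^sub>r t t (\<lambda>k. V (f k))" for f
  have "det (1\<^sub>m t :: 'a mat) = (\<Sum>f\<in>?F. det (mat\<^sub>r t t (\<lambda>k. Cf k (f k) \<cdot>\<^sub>v V (f k))))"
    unfolding idm by (rule det_linear_rows_sum) (auto simp: Vc)
  also have "\<dots> = (\<Sum>f\<in>?F. (\<Prod>k\<in>{0..<t}. Cf k (f k)) * det (G f))"
    unfolding G_def by (intro sum.cong refl det_rows_mul) (auto simp: Vc)
  finally have one: "1 = (\<Sum>f\<in>?F. (\<Prod>k\<in>{0..<t}. Cf k (f k)) * det (G f))" by simp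
  have "\<exists>f\<in>?F. \<not> \<pi> dvd det (G f)"
  proof (rule ccontr)
    assume "\<not> (\<exists>f\<in>?F. \<not> \<pi> dvd det (G f))"
    then have "\<pi> dvd (\<Sum>f\<in>?F. (\<Prod>k\<in>{0..<t}. Cf k (f k)) * det (G f))"
      by (intro dvd_sum) auto
    then show False using one pnu by simp
  qed
  then obtain f where fF: "f \<in> ?F" and nd: "\<not> \<pi> dvd det (G f)" by blast
  have ft: "f k < 2 * t" if "k < t" for k using fF that by auto
  have Gc: "G f \<in> carrier_mat t t" unfolding G_def by simp
  have finj: "inj_on f {0..<t}"
  proof (rule inj_onI, rule ccontr)
    fix i j assume i: "i \<in> {0..<t}" and j: "j \<in> {0..<t}" and fij: "f i = f j" and ij: "i \<noteq> j"
    have "row (G f) i = row (G f) j"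
      by (rule eq_vecI) (use i j fij in \<open>auto simp: G_def\<close>)
    then have "det (G f) = 0" using det_identical_rows[OF Gc ij] i j by simp
    then show False using nd by simp
  qed
  define X where "X = transpose_mat (G f)"
  have Xc: "X \<in> carrier_mat t t" unfolding X_def using Gc by simp
  have detX: "det X dvd 1" using unit nd det_transpose[OF Gc] unfolding X_def by simp
  then obtain v where v: "1 = det X * v" by (auto elim: dvdE)
  have v': "v * det X = 1" "det X * v = 1" using v by (simp_all add: mult.commute)
  define Xi where "Xi = v \<cdot>\<^sub>m adj_mat X"
  have Xic: "Xi \<in> carrier_mat t t" unfolding Xi_def using adj_mat(1)[OF Xc] by simp
  have XXi: "X * Xi = 1\<^sub>m t"
  proof -
    have "X * Xi = v \<cdot>\<^sub>m (X * adj_mat X)" unfolding Xi_def by (rule mult_smult_distrib[OF Xc adj_mat(1)[OF Xc]])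
    also have "\<dots> = v \<cdot>\<^sub>m (det X \<cdot>\<^sub>m 1\<^sub>m t)" using adj_mat(2)[OF Xc] by simp
    also have "\<dots> = 1\<^sub>m t" by (rule eq_matI) (auto simp: v')
    finally show ?thesis .
  qed
  have XiX: "Xi * X = 1\<^sub>m t"
  proof -
    have "Xi * X = v \<cdot>\<^sub>m (adj_mat X * X)" unfolding Xi_def by (rule mult_smult_assoc_mat[OF adj_mat(1)[OF Xc] Xc])
    also have "\<dots> = v \<cdot>\<^sub>m (det X \<cdot>\<^sub>m 1\<^sub>m t)" using adj_mat(3)[OF Xc] by simp
    also have "\<dots> = 1\<^sub>m t" by (rule eq_matI) (auto simp: v')
    finally show ?thesis .
  qed
  define Cm where "Cm = Xi * (\<xi> * X)"
  have Cmc: "Cm \<in> carrier_mat t t" unfolding Cm_def using Xic xi Xc by simp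
  have "X * Cm * Xi = (X * Xi) * \<xi> * (X * Xi)"
    unfolding Cm_def using Xc Xic xi by (simp add: assoc_mult_mat[of _ t t _ t _ t])
  also have "\<dots> = \<xi>" using XXi xi by simp
  finally have xieq: "\<xi> = X * Cm * Xi" by simp
  have sim: "similar_mat \<xi> Cm"
    by (rule similar_matI[of _ _ X Xi t]) (use xi Cmc Xc Xic XXi XiX xieq in auto)
  have cpeq: "char_poly \<xi> = char_poly Cm" by (rule char_poly_similar[OF sim])
  have XV: "col X k = V (f k)" if k: "k < t" for k
  proof -
    have "col X k = row (G f) k" unfolding X_def using k Gc by simp
    also have "\<dots> = V (f k)" by (rule eq_vecI) (use k Vc in \<open>auto simp: G_def\<close>)
    finally show ?thesis .
  qed
  have Cdiv: "\<forall>i<t. \<forall>k<t. \<pi> ^ (wt (f k)) dvd Cm $$ (i, k)"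
  proof (intro allI impI)
    fix i k assume i: "i < t" and k: "k < t"
    have e: "(\<xi> * X) $$ (j, k) = (\<xi> *\<^sub>v V (f k)) $ j" if j: "j < t" for j
      using j k xi Xc XV[OF k] by simp
    have "Cm $$ (i, k) = (\<Sum>j\<in>{0..<t}. Xi $$ (i, j) * (\<xi> * X) $$ (j, k))"
      unfolding Cm_def using i k Xic xi Xc by (simp add: scalar_prod_def)
    also have "\<dots> = (\<Sum>j\<in>{0..<t}. Xi $$ (i, j) * (\<xi> *\<^sub>v V (f k)) $ j)"
      using e by (intro sum.cong) auto
    finally have ce: "Cm $$ (i, k) = (\<Sum>j\<in>{0..<t}. Xi $$ (i, j) * (\<xi> *\<^sub>v V (f k)) $ j)" .
    have "\<pi> ^ (wt (f k)) dvd (\<Sum>j\<in>{0..<t}. Xi $$ (i, j) * (\<xi> *\<^sub>v V (f k)) $ j)"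
      using Vdiv[OF ft[OF k]] by (intro dvd_sum) auto
    then show "\<pi> ^ (wt (f k)) dvd Cm $$ (i, k)" using ce by simp
  qed
  have main: "\<forall>s\<le>t. \<pi> ^ (\<Sum>i=1..s. n - a i) dvd coeff (char_poly \<xi>) (t - s)"
  proof (intro allI impI)
    fix s assume s: "s \<le> t"
    have Meq: "(\<Sum>i=1..s. n - a i) = (\<Sum>j<s. wt j)"
    proof -
      have "(\<Sum>i=1..s. n - a i) = (\<Sum>j<s. n - a (Suc j))" by (rule sum_shift1)
      also have "\<dots> = (\<Sum>j<s. wt j)" using s by (intro sum.cong) (auto simp: wt_def)
      finally show ?thesis .
    qed
    show "\<pi> ^ (\<Sum>i=1..s. n - a i) dvd coeff (char_poly \<xi>) (t - s)"
      unfolding cpeq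
    proof (rule char_poly_coeff_dvd[OF Cmc Cdiv s])
      show "\<forall>S\<subseteq>{0..<t}. s \<le> card S \<longrightarrow> (\<Sum>i=1..s. n - a i) \<le> sum (\<lambda>k. wt (f k)) S"
      proof (intro allI impI)
        fix S assume S: "S \<subseteq> {0..<t}" "s \<le> card S"
        have inj: "inj_on f S" using finj S(1) by (rule inj_on_subset)
        have fS: "finite S" using S(1) finite_subset by blast
        have "sum (\<lambda>k. wt (f k)) S = sum wt (f ` S)" using sum.reindex[OF inj, of wt] by simp
        moreover have "card (f ` S) = card S" using card_image[OF inj] .
        moreover have "(\<Sum>j<s. wt j) \<le> sum wt (f ` S)"
          by (rule sum_mono_weights_ge[OF wtmono]) (use fS S calculation in auto)
        ultimately show "(\<Sum>i=1..s. n - a i) \<le> sum (\<lambda>k. wt (f k)) S" using Meq by simp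
      qed
    qed
  qed
  then show ?thesis unfolding \<pi>_def .
qed

end
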